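(* For any time warps $f,g$: (a) $\mathrm{last}(fg)=\omega$ if and only if ($\mathrm{last}(f)=\omega$ and $\mathrm{last}(g)=\omega$); (b) $\mathrm{last}(f)=\omega\iff\mathrm{last}(f^{r})=\omega\iff\mathrm{last}(f^{\ell})=\omega$.
   Context: Let $\overline{\omega}=\omega\cup\{\omega\}$ be the natural numbers with a top element $\omega$ adjoined, with its natural total order. A time warp is a monotone map $f\colon\overline{\omega}\to\overline{\omega}$ with $f(0)=0$ and $f(\omega)=\bigvee\{f(n)\mid n\in\omega\}$. The set $W$ of time warps is ordered pointwise, $fg:=f\circ g$, $\mathrm{id}$ is the identity. The residuals $\backslash,/$ are the binary operations on $W$ with $f\le h/g\iff fg\le h\iff g\le f\backslash h$ for all $f,g,h$. Define $f^{\ell}:=\mathrm{id}/f$ and $f^{r}:=f\backslash\mathrm{id}$. For a time warp $f$, $\mathrm{last}(f):=\bigwedge\{p\in\overline{\omega}\mid f(p)=f(\omega)\}$. *)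

theory Defs
  imports Main "HOL-Library.Extended_Nat"
begin

text \<open>The extended naturals \<open>\<omega>\<close>-bar are modelled by \<open>enat\<close>, with \<open>\<infinity>\<close> playing the role of \<open>\<omega>\<close>.\<close>

definition time_warp :: "(enat \<Rightarrow> enat) \<Rightarrow> bool" where
  "time_warp f \<longleftrightarrow> mono f \<and> f 0 = 0 \<and> f \<infinity> = (SUP n::nat. f (enat n))"

definition rres :: "(enat \<Rightarrow> enat) \<Rightarrow> (enat \<Rightarrow> enat) \<Rightarrow> (enat \<Rightarrow> enat)" (infixl "'/'/" 70) where
  "h // g = (THE r. time_warp r \<and> (\<forall>f. time_warp f \<longrightarrow> (f \<le> r \<longleftrightarrow> f \<circ> g \<le> h)))"

definition lres :: "(enat \<Rightarrow> enat) \<Rightarrow> (enat \<Rightarrow> enat) \<Rightarrow> (enat \<Rightarrow> enat)" (infixr "\<setminus>\<setminus>" 70) where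
  "f \<setminus>\<setminus> h = (THE r. time_warp r \<and> (\<forall>g. time_warp g \<longrightarrow> (g \<le> r \<longleftrightarrow> f \<circ> g \<le> h)))"

definition ladj :: "(enat \<Rightarrow> enat) \<Rightarrow> (enat \<Rightarrow> enat)" where
  "ladj f = id // f"

definition radj :: "(enat \<Rightarrow> enat) \<Rightarrow> (enat \<Rightarrow> enat)" where
  "radj f = f \<setminus>\<setminus> id"

definition tw_last :: "(enat \<Rightarrow> enat) \<Rightarrow> enat" where
  "tw_last f = Inf {p. f p = f \<infinity>}"

end

theory Submission
  imports Defs
begin

lemma enat_sup_fin_in:
  fixes S :: "enat set"
  assumes "S \<noteq> {}" "Sup S \<noteq> \<infinity>"
  shows "Sup S \<in> S"
proof -
  have "finite S" using assms by (auto simp: Sup_enat_def split: if_splits)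
  then show ?thesis using assms by (simp add: Sup_enat_def)
qed

lemma SUP_inf_iff: "((SUP n. h n) = (\<infinity>::enat)) \<longleftrightarrow> (\<forall>m. \<exists>n. enat m \<le> h n)"
proof
  assume a: "(SUP n. h n) = \<infinity>"
  show "\<forall>m. \<exists>n. enat m \<le> h n"
  proof (rule ccontr)
    assume "\<not> ?thesis"
    then obtain m where "\<forall>n. h n < enat m" by (auto simp: not_le)
    then have "(SUP n. h n) \<le> enat m" by (auto intro: SUP_least less_imp_le)
    with a show False by simp
  qed
next
  assume a: "\<forall>m. \<exists>n. enat m \<le> h n"
  show "(SUP n. h n) = \<infinity>"
  proof (cases "SUP n. h n")
    case (enat k)
    obtain n where "enat (Suc k) \<le> h n" using a by blast
    moreover have "h n \<le> (SUP n. h n)" by (rule SUP_upper) simp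
    ultimately have "enat (Suc k) \<le> enat k" using enat by (metis order_trans)
    then show ?thesis by simp
  qed simp
qed

lemma tw_cont:
  assumes tw: "time_warp f" and ne: "S \<noteq> {}"
  shows "f (Sup S) = Sup (f ` S)"
proof (rule antisym)
  have m: "mono f" using tw by (simp add: time_warp_def)
  show "Sup (f ` S) \<le> f (Sup S)"
    by (rule Sup_least) (auto intro: monoD[OF m] Sup_upper)
  show "f (Sup S) \<le> Sup (f ` S)"
  proof (cases "Sup S = \<infinity>")
    case False
    then have "Sup S \<in> S" using enat_sup_fin_in ne by blast
    then show ?thesis by (simp add: Sup_upper)
  next
    case True
    have "\<forall>m. \<exists>s\<in>S. enat m \<le> s"
    proof (rule ccontr)
      assume "\<not> ?thesis"
      then obtain m where "\<forall>s\<in>S. s < enat m" by (auto simp: not_le)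
      then have "Sup S \<le> enat m" by (auto intro: Sup_least less_imp_le)
      with True show False by simp
    qed
    then have "\<forall>n. f (enat n) \<le> Sup (f ` S)"
      by (meson Sup_upper image_eqI monoD[OF m] order_trans)
    then have "(SUP n. f (enat n)) \<le> Sup (f ` S)" by (auto intro: SUP_least)
    then show ?thesis using True tw by (simp add: time_warp_def)
  qed
qed

lemma last_iff:
  assumes tw: "time_warp f"
  shows "tw_last f = \<infinity> \<longleftrightarrow> f \<infinity> = \<infinity> \<and> (\<forall>n. f (enat n) \<noteq> \<infinity>)"
proof -
  have "tw_last f = \<infinity> \<longleftrightarrow> (\<forall>p. f p = f \<infinity> \<longrightarrow> p = \<infinity>)"
    unfolding tw_last_def top_enat_def[symmetric] by (auto simp: Inf_top_conv)
  also have "\<dots> \<longleftrightarrow> f \<infinity> = \<infinity> \<and> (\<forall>n. f (enat n) \<noteq> \<infinity>)"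
  proof
    assume a: "\<forall>p. f p = f \<infinity> \<longrightarrow> p = \<infinity>"
    have fi: "f \<infinity> = (SUP n. f (enat n))" using tw by (simp add: time_warp_def)
    have "f \<infinity> = \<infinity>"
    proof (rule ccontr)
      assume "f \<infinity> \<noteq> \<infinity>"
      then have "Sup (range (\<lambda>n. f (enat n))) \<in> range (\<lambda>n. f (enat n))"
        using fi enat_sup_fin_in[of "range (\<lambda>n. f (enat n))"] by simp
      then obtain n where "f (enat n) = f \<infinity>" using fi by auto
      with a show False by auto
    qed
    with a show "f \<infinity> = \<infinity> \<and> (\<forall>n. f (enat n) \<noteq> \<infinity>)" by auto
  next
    assume "f \<infinity> = \<infinity> \<and> (\<forall>n. f (enat n) \<noteq> \<infinity>)"
    then show "\<forall>p. f p = f \<infinity> \<longrightarrow> p = \<infinity>" by (metis enat.exhaust)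
  qed
  finally show ?thesis .
qed

definition ext :: "(nat \<Rightarrow> enat) \<Rightarrow> enat \<Rightarrow> enat" where
  "ext \<phi> p = (case p of enat n \<Rightarrow> \<phi> n | \<infinity> \<Rightarrow> (SUP n. \<phi> n))"

lemma ext_simps[simp]: "ext \<phi> (enat n) = \<phi> n" "ext \<phi> \<infinity> = (SUP n. \<phi> n)"
  by (simp_all add: ext_def)

lemma tw_ext:
  assumes "mono \<phi>" "\<phi> 0 = 0"
  shows "time_warp (ext \<phi>)"
  unfolding time_warp_def
proof (intro conjI)
  show "mono (ext \<phi>)"
  proof (rule monoI)
    fix x y :: enat assume "x \<le> y"
    then show "ext \<phi> x \<le> ext \<phi> y"
      by (cases x; cases y) (auto intro: monoD[OF assms(1)] SUP_upper2)
  qed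
  show "ext \<phi> 0 = 0" using assms by (simp add: zero_enat_def)
  show "ext \<phi> \<infinity> = (SUP n. ext \<phi> (enat n))" by simp
qed

lemma le_ext:
  assumes "time_warp g"
  shows "g \<le> ext \<phi> \<longleftrightarrow> (\<forall>n. g (enat n) \<le> \<phi> n)"
proof
  assume "g \<le> ext \<phi>" then show "\<forall>n. g (enat n) \<le> \<phi> n" by (metis ext_simps(1) le_funD)
next
  assume a: "\<forall>n. g (enat n) \<le> \<phi> n"
  have "g \<infinity> \<le> (SUP n. \<phi> n)"
    using assms a by (simp add: time_warp_def SUP_mono')
  then show "g \<le> ext \<phi>" using a
    by (simp add: le_fun_def) (metis enat.exhaust ext_simps)
qed

lemma comp_le_id:
  "f \<circ> g \<le> id \<longleftrightarrow> (\<forall>n. f (g (enat n)) \<le> enat n)"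
  by (auto simp: le_fun_def) (metis enat.exhaust enat_ord_code(3))

lemma last_iff0: "tw_last f = \<infinity> \<longleftrightarrow> (\<forall>p. f p = f \<infinity> \<longrightarrow> p = \<infinity>)"
  unfolding tw_last_def top_enat_def[symmetric] by (auto simp: Inf_top_conv)

definition R :: "(enat \<Rightarrow> enat) \<Rightarrow> nat \<Rightarrow> enat" where
  "R f n = (if n = 0 then 0 else Sup {q. f q \<le> enat n})"

definition L :: "(enat \<Rightarrow> enat) \<Rightarrow> nat \<Rightarrow> enat" where
  "L f n = Inf {q. enat n \<le> f q}"

lemma radj_eq:
  assumes tw: "time_warp f"
  shows "radj f = ext (R f)"
proof -
  have m: "mono f" and f0: "f 0 = 0" using tw by (auto simp: time_warp_def)
  have monoR: "mono (R f)"
  proof (rule monoI)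
    fix a b :: nat assume "a \<le> b"
    moreover have "{q. f q \<le> enat a} \<subseteq> {q. f q \<le> enat b}" using \<open>a \<le> b\<close> by (auto intro: order_trans)
    ultimately show "R f a \<le> R f b"
      unfolding R_def by (simp add: Sup_subset_mono)
  qed
  have twR: "time_warp (ext (R f))" by (rule tw_ext[OF monoR]) (simp add: R_def)
  have gal: "g \<le> ext (R f) \<longleftrightarrow> f \<circ> g \<le> id" if tg: "time_warp g" for g
  proof -
    have g0: "g 0 = 0" using tg by (simp add: time_warp_def)
    have "g (enat n) \<le> R f n \<longleftrightarrow> f (g (enat n)) \<le> enat n" for n
    proof (cases "n = 0")
      case True
      then show ?thesis using g0 f0 by (simp add: R_def zero_enat_def[symmetric])
    next
      case False
      let ?S = "{q. f q \<le> enat n}"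
      have "0 \<in> ?S" using f0 by simp
      then have ne: "?S \<noteq> {}" by blast
      have "f (Sup ?S) = Sup (f ` ?S)" by (rule tw_cont[OF tw ne])
      also have "\<dots> \<le> enat n" by (auto intro: Sup_least)
      finally have fS: "f (Sup ?S) \<le> enat n" .
      show ?thesis
      proof
        assume "g (enat n) \<le> R f n"
        then have "f (g (enat n)) \<le> f (Sup ?S)" using False by (simp add: R_def monoD[OF m])
        then show "f (g (enat n)) \<le> enat n" using fS by simp
      next
        assume "f (g (enat n)) \<le> enat n"
        then show "g (enat n) \<le> R f n" using False by (simp add: R_def Sup_upper)
      qed
    qed
    then show ?thesis unfolding le_ext[OF tg] comp_le_id by blast
  qed
  show ?thesis
    unfolding radj_def lres_def
  proof (rule the_equality)
    show "time_warp (ext (R f)) \<and> (\<forall>g. time_warp g \<longrightarrow> (g \<le> ext (R f)) = (f \<circ> g \<le> id))"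
      using twR gal by blast
  next
    fix r assume a: "time_warp r \<and> (\<forall>g. time_warp g \<longrightarrow> (g \<le> r) = (f \<circ> g \<le> id))"
    have "r \<le> ext (R f)" using a gal[of r] by blast
    moreover have "ext (R f) \<le> r" using a gal[of "ext (R f)"] twR by blast
    ultimately show "r = ext (R f)" by (rule antisym)
  qed
qed

lemma ladj_eq:
  assumes tw: "time_warp f"
  shows "ladj f = ext (L f)"
proof -
  have m: "mono f" and f0: "f 0 = 0" using tw by (auto simp: time_warp_def)
  have monoL: "mono (L f)"
  proof (rule monoI)
    fix a b :: nat assume "a \<le> b"
    then have "{q. enat b \<le> f q} \<subseteq> {q. enat a \<le> f q}" by (auto intro: order_trans[of "enat a" "enat b"])
    then show "L f a \<le> L f b"
      unfolding L_def by (rule Inf_superset_mono)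
  qed
  have "(0::enat) \<in> {q. enat 0 \<le> f q}" by (simp add: zero_enat_def[symmetric])
  then have "L f 0 \<le> 0" unfolding L_def by (rule Inf_lower)
  then have "L f 0 = 0" by simp
  then have twL: "time_warp (ext (L f))" by (rule tw_ext[OF monoL])
  have key: "r \<le> ext (L f) \<longleftrightarrow> r \<circ> f \<le> id" if tr: "time_warp r" for r
  proof -
    have mr: "mono r" and ri: "r \<infinity> = (SUP n. r (enat n))" using tr by (auto simp: time_warp_def)
    have "r \<le> ext (L f) \<longleftrightarrow> (\<forall>n. r (enat n) \<le> L f n)" by (rule le_ext[OF tr])
    also have "\<dots> \<longleftrightarrow> (\<forall>q. r (f q) \<le> q)"
    proof
      assume a: "\<forall>n. r (enat n) \<le> L f n"
      show "\<forall>q. r (f q) \<le> q"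
      proof
        fix q :: enat
        show "r (f q) \<le> q"
        proof (cases q)
          case (enat k)
          have b: "r (enat n) \<le> q" if "enat n \<le> f q" for n
            using a[rule_format, of n] that unfolding L_def
            by (meson Inf_lower mem_Collect_eq order_trans)
          show ?thesis
          proof (cases "f q")
            case (enat n)
            then show ?thesis using b[of n] by simp
          next
            case infinity
            then show ?thesis using b ri by (auto intro: SUP_least)
          qed
        qed simp
      qed
    next
      assume a: "\<forall>q. r (f q) \<le> q"
      show "\<forall>n. r (enat n) \<le> L f n"
        unfolding L_def
        by (auto intro!: Inf_greatest) (meson a monoD[OF mr] order_trans)
    qed
    also have "\<dots> \<longleftrightarrow> r \<circ> f \<le> id" by (simp add: le_fun_def)
    finally show ?thesis .
  qed
  show ?thesis
    unfolding ladj_def rres_def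
  proof (rule the_equality)
    show "time_warp (ext (L f)) \<and> (\<forall>g. time_warp g \<longrightarrow> (g \<le> ext (L f)) = (g \<circ> f \<le> id))"
      using twL key by blast
  next
    fix r assume a: "time_warp r \<and> (\<forall>g. time_warp g \<longrightarrow> (g \<le> r) = (g \<circ> f \<le> id))"
    have "r \<le> ext (L f)" using a key[of r] by blast
    moreover have "ext (L f) \<le> r" using a key[of "ext (L f)"] twL by blast
    ultimately show "r = ext (L f)" by (rule antisym)
  qed
qed

lemma R_fin:
  assumes tw: "time_warp f"
  shows "(\<forall>n. R f n \<noteq> \<infinity>) \<longleftrightarrow> f \<infinity> = \<infinity>"
proof
  assume a: "\<forall>n. R f n \<noteq> \<infinity>"
  show "f \<infinity> = \<infinity>"
  proof (cases "f \<infinity>")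
    case (enat k)
    then have "\<infinity> \<in> {q. f q \<le> enat (Suc k)}" by simp
    then have "Sup {q. f q \<le> enat (Suc k)} = \<infinity>"
      by (metis Sup_upper top.extremum_unique top_enat_def)
    then show ?thesis using a[rule_format, of "Suc k"] by (simp add: R_def)
  qed simp
next
  assume fi: "f \<infinity> = \<infinity>"
  have f0: "f 0 = 0" using tw by (simp add: time_warp_def)
  show "\<forall>n. R f n \<noteq> \<infinity>"
  proof (intro allI notI)
    fix n assume r: "R f n = \<infinity>"
    then have n0: "n \<noteq> 0" by (simp add: R_def split: if_splits)
    let ?S = "{q. f q \<le> enat n}"
    have ne: "?S \<noteq> {}" using f0 by (metis (mono_tags) empty_iff mem_Collect_eq zero_le)
    have "f (Sup ?S) = Sup (f ` ?S)" by (rule tw_cont[OF tw ne])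
    also have "\<dots> \<le> enat n" by (auto intro: Sup_least)
    finally have "f (Sup ?S) \<le> enat n" .
    then show False using r n0 fi by (simp add: R_def)
  qed
qed

lemma R_sup:
  assumes tw: "time_warp f"
  shows "(SUP n. R f n) = \<infinity> \<longleftrightarrow> (\<forall>m. f (enat m) \<noteq> \<infinity>)"
proof -
  have m: "mono f" using tw by (simp add: time_warp_def)
  show ?thesis
    unfolding SUP_inf_iff
  proof
    assume a: "\<forall>m. \<exists>n. enat m \<le> R f n"
    show "\<forall>m. f (enat m) \<noteq> \<infinity>"
    proof (intro allI notI)
      fix m assume fm: "f (enat m) = \<infinity>"
      obtain n where n: "enat (Suc m) \<le> R f n" using a by blast
      have "\<forall>q\<in>{q. f q \<le> enat n}. q \<le> enat m"
      proof
        fix q assume "q \<in> {q. f q \<le> enat n}"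
        then have "f q \<le> enat n" by simp
        show "q \<le> enat m"
        proof (rule ccontr)
          assume "\<not> q \<le> enat m"
          then have "enat m \<le> q" by simp
          then have "f (enat m) \<le> f q" by (rule monoD[OF m])
          with fm \<open>f q \<le> enat n\<close> show False by simp
        qed
      qed
      then have "Sup {q. f q \<le> enat n} \<le> enat m" by (auto intro: Sup_least)
      then have "R f n \<le> enat m" by (simp add: R_def)
      with n have "enat (Suc m) \<le> enat m" by (rule order_trans)
      then show False by simp
    qed
  next
    assume a: "\<forall>m. f (enat m) \<noteq> \<infinity>"
    show "\<forall>m. \<exists>n. enat m \<le> R f n"
    proof
      fix m
      obtain k where k: "f (enat m) = enat k" using a[rule_format, of m] by (cases "f (enat m)") auto
      have "enat m \<in> {q. f q \<le> enat (Suc k)}" using k by simp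
      then have "enat m \<le> R f (Suc k)" by (simp add: R_def Sup_upper)
      then show "\<exists>n. enat m \<le> R f n" ..
    qed
  qed
qed

lemma L_fin:
  assumes tw: "time_warp f"
  shows "(\<forall>n. L f n \<noteq> \<infinity>) \<longleftrightarrow> f \<infinity> = \<infinity>"
proof -
  have "L f n \<noteq> \<infinity> \<longleftrightarrow> (\<exists>k. enat n \<le> f (enat k))" for n
  proof
    assume "L f n \<noteq> \<infinity>"
    then obtain q where "enat n \<le> f q" "q \<noteq> \<infinity>" unfolding L_def top_enat_def[symmetric]
      by (auto simp: Inf_top_conv)
    then show "\<exists>k. enat n \<le> f (enat k)" by (metis enat.exhaust)
  next
    assume "\<exists>k. enat n \<le> f (enat k)"
    then obtain k where "enat n \<le> f (enat k)" by blast
    then have "L f n \<le> enat k" unfolding L_def by (simp add: Inf_lower)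
    then show "L f n \<noteq> \<infinity>" by (cases "L f n") auto
  qed
  then have "(\<forall>n. L f n \<noteq> \<infinity>) \<longleftrightarrow> (SUP k. f (enat k)) = \<infinity>"
    unfolding SUP_inf_iff by simp
  then show ?thesis using tw by (simp add: time_warp_def)
qed

lemma L_sup:
  assumes tw: "time_warp f"
  shows "(SUP n. L f n) = \<infinity> \<longleftrightarrow> (\<forall>m. f (enat m) \<noteq> \<infinity>)"
proof -
  have m: "mono f" using tw by (simp add: time_warp_def)
  show ?thesis
    unfolding SUP_inf_iff
  proof
    assume a: "\<forall>m. \<exists>n. enat m \<le> L f n"
    show "\<forall>m. f (enat m) \<noteq> \<infinity>"
    proof (intro allI notI)
      fix m assume fm: "f (enat m) = \<infinity>"
      obtain n where n: "enat (Suc m) \<le> L f n" using a by blast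
      have "L f n \<le> enat m" unfolding L_def using fm by (simp add: Inf_lower)
      with n have "enat (Suc m) \<le> enat m" by (rule order_trans)
      then show False by simp
    qed
  next
    assume a: "\<forall>m. f (enat m) \<noteq> \<infinity>"
    show "\<forall>m. \<exists>n. enat m \<le> L f n"
    proof
      fix m
      obtain k where k: "f (enat m) = enat k" using a[rule_format, of m] by (cases "f (enat m)") auto
      have "enat m \<le> L f (Suc k)" unfolding L_def
      proof (rule Inf_greatest)
        fix q assume "q \<in> {q. enat (Suc k) \<le> f q}"
        then have q: "enat (Suc k) \<le> f q" by simp
        show "enat m \<le> q"
        proof (rule ccontr)
          assume "\<not> enat m \<le> q"
          then have "f q \<le> f (enat m)" using monoD[OF m] by simp
          with k have "f q \<le> enat k" by simp
          with q have "enat (Suc k) \<le> enat k" by (rule order_trans)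
          then show False by simp
        qed
      qed
      then show "\<exists>n. enat m \<le> L f n" ..
    qed
  qed
qed

lemma twR: assumes tw: "time_warp f" shows "time_warp (ext (R f))"
proof -
  have monoR: "mono (R f)"
  proof (rule monoI)
    fix a b :: nat assume "a \<le> b"
    moreover have "{q. f q \<le> enat a} \<subseteq> {q. f q \<le> enat b}" using \<open>a \<le> b\<close> by (auto intro: order_trans)
    ultimately show "R f a \<le> R f b"
      unfolding R_def by (simp add: Sup_subset_mono)
  qed
  have twR: "time_warp (ext (R f))" by (rule tw_ext[OF monoR]) (simp add: R_def)
  then show ?thesis .
qed

lemma twL: assumes tw: "time_warp f" shows "time_warp (ext (L f))"
proof -
  have monoL: "mono (L f)"
  proof (rule monoI)
    fix a b :: nat assume "a \<le> b"
    then have "{q. enat b \<le> f q} \<subseteq> {q. enat a \<le> f q}" by (auto intro: order_trans[of "enat a" "enat b"])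
    then show "L f a \<le> L f b"
      unfolding L_def by (rule Inf_superset_mono)
  qed
  have "(0::enat) \<in> {q. enat 0 \<le> f q}" by (simp add: zero_enat_def[symmetric])
  then have "L f 0 \<le> 0" unfolding L_def by (rule Inf_lower)
  then have "L f 0 = 0" by simp
  then have twL: "time_warp (ext (L f))" by (rule tw_ext[OF monoL])
  then show ?thesis .
qed

theorem lemma2p11:
  assumes "time_warp f" and "time_warp g"
  shows "(tw_last (f \<circ> g) = \<infinity> \<longleftrightarrow> tw_last f = \<infinity> \<and> tw_last g = \<infinity>)
    \<and> (tw_last f = \<infinity> \<longleftrightarrow> tw_last (radj f) = \<infinity>)
    \<and> (tw_last (radj f) = \<infinity> \<longleftrightarrow> tw_last (ladj f) = \<infinity>)"
proof -
  have tf: "time_warp f" and tg: "time_warp g" using assms by auto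
  have mf: "mono f" using tf by (simp add: time_warp_def)
  have gi: "g \<infinity> = (SUP n. g (enat n))" using tg by (simp add: time_warp_def)
  have a: "tw_last (f \<circ> g) = \<infinity> \<longleftrightarrow> tw_last f = \<infinity> \<and> tw_last g = \<infinity>"
  proof
    assume "tw_last (f \<circ> g) = \<infinity>"
    then have H: "\<forall>p. f (g p) = f (g \<infinity>) \<longrightarrow> p = \<infinity>" by (simp add: last_iff0)
    then have lg: "tw_last g = \<infinity>" by (simp add: last_iff0)
    then have g8: "g \<infinity> = \<infinity>" using last_iff[OF tg] by simp
    have "\<forall>p. f p = f \<infinity> \<longrightarrow> p = \<infinity>"
    proof (intro allI impI)
      fix p assume fp: "f p = f \<infinity>"
      show "p = \<infinity>"
      proof (cases p)
        case (enat m)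
        obtain n where n: "enat m \<le> g (enat n)" using g8 gi SUP_inf_iff by metis
        have "f p \<le> f (g (enat n))" using monoD[OF mf n] enat by simp
        moreover have "f (g (enat n)) \<le> f \<infinity>" by (rule monoD[OF mf]) simp
        ultimately have "f (g (enat n)) = f (g \<infinity>)" using fp g8 by simp
        then show ?thesis using H by auto
      qed simp
    qed
    then show "tw_last f = \<infinity> \<and> tw_last g = \<infinity>" using lg by (simp add: last_iff0)
  next
    assume "tw_last f = \<infinity> \<and> tw_last g = \<infinity>"
    then have cf: "f \<infinity> = \<infinity> \<and> (\<forall>n. f (enat n) \<noteq> \<infinity>)" and cg: "g \<infinity> = \<infinity> \<and> (\<forall>n. g (enat n) \<noteq> \<infinity>)"
      using last_iff[OF tf] last_iff[OF tg] by auto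
    have "\<forall>p. f (g p) = f (g \<infinity>) \<longrightarrow> p = \<infinity>"
    proof (intro allI impI)
      fix p assume "f (g p) = f (g \<infinity>)"
      then have e: "f (g p) = \<infinity>" using cf cg by simp
      show "p = \<infinity>"
      proof (cases p)
        case (enat n)
        then obtain k where "g p = enat k" using cg by (metis enat.exhaust)
        then show ?thesis using e cf by auto
      qed simp
    qed
    then show "tw_last (f \<circ> g) = \<infinity>" by (simp add: last_iff0)
  qed
  have cR: "tw_last (radj f) = \<infinity> \<longleftrightarrow> tw_last f = \<infinity>"
    unfolding radj_eq[OF tf] last_iff[OF twR[OF tf]] last_iff[OF tf]
    using R_fin[OF tf] R_sup[OF tf] by auto
  have cL: "tw_last (ladj f) = \<infinity> \<longleftrightarrow> tw_last f = \<infinity>"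
    unfolding ladj_eq[OF tf] last_iff[OF twL[OF tf]] last_iff[OF tf]
    using L_fin[OF tf] L_sup[OF tf] by auto
  show ?thesis using a cR cL by auto
qed

end
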